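(* Let $C_{\log}>0$, let $\gamma,\gamma'\in\mathbb{R}^d_{>0}$ with $\gamma'_i\ge\gamma_i$ for all $i\in[d]$, let $L,L'\in\mathbb{R}^d_{>0}$, and let $\psi:\mathbb{R}_{>0}\to\mathbb{R}$ be a twice differentiable convex function such that $\frac{\psi''(x)}{4}\le\psi''(z)\le4\psi''(x)$ for all $x>0$ and $z\in[x/2,2x]$. Define $\phi(p)=\sum_{i\in[d]}\gamma_i\psi(p_i)$, $\phi'(p)=\sum_{i\in[d]}\gamma'_i\psi(p_i)$, $\phi_L(p)=-C_{\log}\sum_{i\in[d]}\log p_i$, $F(p)=\langle p,L\rangle+\phi(p)+\phi_L(p)$ and $F'(p)=\langle p,L'\rangle+\phi'(p)+\phi_L(p)$. Let $\Omega\subseteq\mathbb{R}^d_{>0}$ be convex, and let $x=\arg\min_{p\in\Omega}F(p)$, $y=\arg\min_{p\in\Omega}F'(p)$. If $$C_{\log}\ge\max\Big\{9,\ 32\sum_{i\in[d]}(L'_i-L_i)^2x_i^2,\ 32\sum_{i\in[d]}(\gamma'_i-\gamma_i)^2\psi'(x_i)^2x_i^2\Big\},$$ then $\frac12x_i\le y_i\le2x_i$ for all $i\in[d]$. *)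

theory Defs
  imports "HOL-Analysis.Analysis"
begin

definition reg_phi :: "(real^'d) \<Rightarrow> (real \<Rightarrow> real) \<Rightarrow> (real^'d) \<Rightarrow> real" where
  "reg_phi \<gamma> \<psi> p = (\<Sum>i\<in>UNIV. \<gamma>$i * \<psi> (p$i))"

definition log_barrier :: "real \<Rightarrow> (real^'d) \<Rightarrow> real" where
  "log_barrier C p = - C * (\<Sum>i\<in>UNIV. ln (p$i))"

definition objF :: "(real^'d) \<Rightarrow> (real^'d) \<Rightarrow> (real \<Rightarrow> real) \<Rightarrow> real \<Rightarrow> (real^'d) \<Rightarrow> real" where
  "objF L \<gamma> \<psi> C p = (\<Sum>i\<in>UNIV. p$i * L$i) + reg_phi \<gamma> \<psi> p + log_barrier C p"

definition is_argmin :: "('a \<Rightarrow> real) \<Rightarrow> 'a set \<Rightarrow> 'a \<Rightarrow> bool" where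
  "is_argmin F \<Omega> x \<longleftrightarrow> x \<in> \<Omega> \<and> (\<forall>p\<in>\<Omega>. F x \<le> F p)"

end

theory Submission
  imports Defs
begin

lemma w_bound_ge1:
  fixes r :: real assumes "r \<ge> 1"
  shows "r^2 - 1 - 2 * r * ln r \<ge> 0"
proof -
  have "(\<lambda>s. s^2 - 1 - 2 * s * ln s) 1 \<le> (\<lambda>s. s^2 - 1 - 2 * s * ln s) r"
  proof (rule DERIV_nonneg_imp_nondecreasing[OF assms])
    fix s :: real assume s: "1 \<le> s" "s \<le> r"
    show "\<exists>y. ((\<lambda>s. s^2 - 1 - 2 * s * ln s) has_real_derivative y) (at s) \<and> 0 \<le> y"
    proof (intro exI conjI)
      show "((\<lambda>s. s^2 - 1 - 2 * s * ln s) has_real_derivative (2 * s - 2 * ln s - 2)) (at s)"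
        using s by (auto intro!: derivative_eq_intros simp: field_simps)
      show "0 \<le> 2 * s - 2 * ln s - 2" using ln_le_minus_one[of s] s by simp
    qed
  qed
  then show ?thesis by simp
qed

lemma w_bound:
  fixes r :: real assumes r: "r > 0"
  shows "r - 1 - ln r \<ge> (r-1)^2 / (2 * (1 + \<bar>r - 1\<bar>))"
proof (cases "r \<ge> 1")
  case True
  have "r^2 - 1 - 2 * r * ln r \<ge> 0" by (rule w_bound_ge1[OF True])
  then have "(r-1)^2 \<le> 2 * r * (r - 1 - ln r)" by (simp add: power2_eq_square algebra_simps)
  then show ?thesis using True by (simp add: field_simps)
next
  case False
  let ?g = "\<lambda>s::real. s - 1 - ln s - (s-1)^2/2"
  have "?g 1 \<le> ?g r"
  proof (rule deriv_nonpos_imp_antimono[where g = ?g and a = r and b = 1 and g' = "\<lambda>s. 1 - 1/s - (s - 1)"])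
    fix s assume s: "s \<in> {r..1}"
    then have sp: "s > 0" using r by auto
    show "(?g has_real_derivative 1 - 1/s - (s - 1)) (at s)"
      using sp by (auto intro!: derivative_eq_intros simp: field_simps power2_eq_square)
    have "1 - 1/s - (s-1) = -((s-1)^2/s)" using sp by (simp add: field_simps power2_eq_square)
    also have "\<dots> \<le> 0" using sp by simp
    finally show "1 - 1/s - (s - 1) \<le> 0" .
  qed (use False in auto)
  then have "(r-1)^2/2 \<le> r - 1 - ln r" by simp
  moreover have "(r-1)^2 / (2 * (1 + \<bar>r - 1\<bar>)) \<le> (r-1)^2/2"
    by (intro divide_left_mono) (auto simp: add_pos_nonneg)
  ultimately show ?thesis by linarith
qed


theorem lemma29:
  fixes C :: real
    and \<gamma> \<gamma>' L L' :: "real^'d"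
    and \<psi> \<psi>1 \<psi>2 :: "real \<Rightarrow> real"
    and \<Omega> :: "(real^'d) set"
    and x y :: "real^'d"
  assumes C_pos: "C > 0"
    and \<gamma>_pos: "\<And>i. \<gamma>$i > 0" and \<gamma>'_pos: "\<And>i. \<gamma>'$i > 0"
    and \<gamma>_le: "\<And>i. \<gamma>'$i \<ge> \<gamma>$i"
    and L_pos: "\<And>i. L$i > 0" and L'_pos: "\<And>i. L'$i > 0"
    and d1: "\<And>t. t > 0 \<Longrightarrow> (\<psi> has_real_derivative \<psi>1 t) (at t)"
    and d2: "\<And>t. t > 0 \<Longrightarrow> (\<psi>1 has_real_derivative \<psi>2 t) (at t)"
    and cvx: "convex_on {0<..} \<psi>"
    and stab: "\<And>t z. t > 0 \<Longrightarrow> t / 2 \<le> z \<Longrightarrow> z \<le> 2 * t \<Longrightarrow>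
                 \<psi>2 t / 4 \<le> \<psi>2 z \<and> \<psi>2 z \<le> 4 * \<psi>2 t"
    and \<Omega>_pos: "\<Omega> \<subseteq> {p. \<forall>i. p$i > 0}"
    and \<Omega>_cvx: "convex \<Omega>"
    and x_min: "is_argmin (objF L \<gamma> \<psi> C) \<Omega> x"
    and y_min: "is_argmin (objF L' \<gamma>' \<psi> C) \<Omega> y"
    and C_big: "C \<ge> Max {9, 32 * (\<Sum>i\<in>UNIV. (L'$i - L$i)^2 * (x$i)^2),
                              32 * (\<Sum>i\<in>UNIV. (\<gamma>'$i - \<gamma>$i)^2 * (\<psi>1 (x$i))^2 * (x$i)^2)}"
  shows "\<forall>i. x$i / 2 \<le> y$i \<and> y$i \<le> 2 * x$i"
proof -
  have xO: "x \<in> \<Omega>" and xle: "\<And>p. p \<in> \<Omega> \<Longrightarrow> objF L \<gamma> \<psi> C x \<le> objF L \<gamma> \<psi> C p"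
    using x_min by (auto simp: is_argmin_def)
  have yO: "y \<in> \<Omega>" and yle: "\<And>p. p \<in> \<Omega> \<Longrightarrow> objF L' \<gamma>' \<psi> C y \<le> objF L' \<gamma>' \<psi> C p"
    using y_min by (auto simp: is_argmin_def)
  have xpos: "\<And>i. x$i > 0" using xO \<Omega>_pos by auto
  have ypos: "\<And>i. y$i > 0" using yO \<Omega>_pos by auto
  have objF_eq: "\<And>L\<gamma> \<gamma>\<gamma> p. objF L\<gamma> \<gamma>\<gamma> \<psi> C p = (\<Sum>i\<in>UNIV. p$i * L\<gamma>$i + \<gamma>\<gamma>$i * \<psi> (p$i) - C * ln (p$i))"
    by (simp add: objF_def reg_phi_def log_barrier_def sum.distrib sum_subtractf sum_distrib_left sum_negf)
  define h where "h i = y$i - x$i" for i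
  define f where "f t = (\<Sum>i\<in>UNIV. (x$i + t * h i) * L$i + \<gamma>$i * \<psi> (x$i + t * h i) - C * ln (x$i + t * h i))" for t
  define D where "D = (\<Sum>i\<in>UNIV. h i * L$i + \<gamma>$i * (\<psi>1 (x$i) * h i) - C * (h i / x$i))"
  have f_eq: "f t = objF L \<gamma> \<psi> C ((1 - t) *\<^sub>R x + t *\<^sub>R y)" for t
    unfolding objF_eq f_def h_def by (intro sum.cong) (auto simp: algebra_simps)
  have fmin: "f 0 \<le> f t" if "0 \<le> t" "t \<le> 1" for t
  proof -
    have "(1 - t) *\<^sub>R x + t *\<^sub>R y \<in> \<Omega>"
      using \<Omega>_cvx xO yO that unfolding convex_def by auto
    then show ?thesis using xle[of "(1 - t) *\<^sub>R x + t *\<^sub>R y"] f_eq[of 0] f_eq[of t] by simp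
  qed
  have fder: "(f has_real_derivative D) (at 0)"
    unfolding f_def D_def
  proof (rule DERIV_sum)
    fix i :: 'd
    have p: "x$i + 0 * h i > 0" using xpos[of i] by simp
    have g: "((\<lambda>t. x$i + t * h i) has_real_derivative h i) (at 0)"
      by (auto intro!: derivative_eq_intros)
    have c: "((\<lambda>t. \<psi> (x$i + t * h i)) has_real_derivative \<psi>1 (x$i + 0 * h i) * h i) (at 0)"
      by (rule DERIV_chain2[OF d1[OF p] g])
    have l: "((\<lambda>t. ln (x$i + t * h i)) has_real_derivative (inverse (x$i + 0 * h i)) * h i) (at 0)"
      by (rule DERIV_chain2[OF DERIV_ln[OF p] g])
    have "((\<lambda>t. (x$i + t * h i) * L$i + \<gamma>$i * \<psi> (x$i + t * h i) - C * ln (x$i + t * h i))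
       has_real_derivative (h i * L$i + \<gamma>$i * (\<psi>1 (x$i + 0 * h i) * h i) - C * ((inverse (x$i + 0 * h i)) * h i))) (at 0)"
      by (intro DERIV_diff DERIV_add DERIV_cmult DERIV_cmult_right c l g)
    then show "((\<lambda>t. (x$i + t * h i) * L$i + \<gamma>$i * \<psi> (x$i + t * h i) - C * ln (x$i + t * h i))
       has_real_derivative (h i * L$i + \<gamma>$i * (\<psi>1 (x$i) * h i) - C * (h i / x$i))) (at 0)"
      by (simp add: divide_inverse mult.commute)
  qed
  have D_nonneg: "D \<ge> 0"
  proof (rule ccontr)
    assume "\<not> D \<ge> 0"
    then obtain d where d: "d > 0" "\<And>e. e > 0 \<Longrightarrow> e < d \<Longrightarrow> f 0 > f (0 + e)"
      using DERIV_neg_dec_right[OF fder] by force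
    have "f 0 > f (0 + min (d/2) 1)" using d by auto
    moreover have "f 0 \<le> f (min (d/2) 1)" using d by (intro fmin) auto
    ultimately show False by simp
  qed
  define u where "u i = h i / x$i" for i
  define w where "w i = y$i / x$i - 1 - ln (y$i / x$i)" for i
  define a where "a i = ((L'$i - L$i) + (\<gamma>'$i - \<gamma>$i) * \<psi>1 (x$i)) * x$i" for i
  have term_bd: "(y$i * L'$i + \<gamma>'$i * \<psi> (y$i) - C * ln (y$i)) - (x$i * L'$i + \<gamma>'$i * \<psi> (x$i) - C * ln (x$i))
      \<ge> (h i * L$i + \<gamma>$i * (\<psi>1 (x$i) * h i) - C * (h i / x$i)) + a i * u i + C * w i" for i
  proof -
    have xi: "x$i > 0" and yi: "y$i > 0" using xpos ypos by auto
    have tan: "\<psi> (y$i) - \<psi> (x$i) \<ge> \<psi>1 (x$i) * (y$i - x$i)"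
    proof (rule convex_on_imp_above_tangent[OF cvx])
      show "connected {0::real<..}" by simp
      show "x$i \<in> interior {0::real<..}" using xi by (simp add: interior_open)
      show "y$i \<in> {0<..}" using yi by simp
      show "(\<psi> has_field_derivative \<psi>1 (x$i)) (at (x$i) within {0<..})"
        using d1[OF xi] by (rule has_field_derivative_at_within)
    qed
    have "\<gamma>'$i * (\<psi>1 (x$i) * (y$i - x$i)) \<le> \<gamma>'$i * (\<psi> (y$i) - \<psi> (x$i))"
      using tan \<gamma>'_pos[of i] by (intro mult_left_mono) auto
    moreover have "ln (y$i / x$i) = ln (y$i) - ln (x$i)" using xi yi by (simp add: ln_div)
    moreover have "(h i * L$i + \<gamma>$i * (\<psi>1 (x$i) * h i) - C * (h i / x$i)) + a i * u i + C * w i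
        = h i * L'$i + \<gamma>'$i * (\<psi>1 (x$i) * h i) - C * ln (y$i / x$i)"
      unfolding a_def u_def w_def h_def using xi by (simp add: field_simps)
    moreover have "y$i * L'$i - x$i * L'$i = h i * L'$i" by (simp add: h_def algebra_simps)
    moreover have "\<gamma>'$i * (\<psi>1 (x$i) * (y$i - x$i)) = \<gamma>'$i * (\<psi>1 (x$i) * h i)" by (simp add: h_def)
    moreover have "C * ln (y$i / x$i) = C * ln (y$i) - C * ln (x$i)" using xi yi by (simp add: ln_div algebra_simps)
    moreover have "\<gamma>'$i * (\<psi> (y$i) - \<psi> (x$i)) = \<gamma>'$i * \<psi> (y$i) - \<gamma>'$i * \<psi> (x$i)" by (simp add: algebra_simps)
    ultimately show ?thesis by linarith
  qed
  have "objF L' \<gamma>' \<psi> C y - objF L' \<gamma>' \<psi> C x \<ge> D + (\<Sum>i\<in>UNIV. a i * u i) + C * (\<Sum>i\<in>UNIV. w i)"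
  proof -
    have "D + (\<Sum>i\<in>UNIV. a i * u i) + C * (\<Sum>i\<in>UNIV. w i)
      = (\<Sum>i\<in>UNIV. (h i * L$i + \<gamma>$i * (\<psi>1 (x$i) * h i) - C * (h i / x$i)) + a i * u i + C * w i)"
      unfolding D_def by (simp add: sum.distrib sum_distrib_left)
    also have "\<dots> \<le> (\<Sum>i\<in>UNIV. (y$i * L'$i + \<gamma>'$i * \<psi> (y$i) - C * ln (y$i)) - (x$i * L'$i + \<gamma>'$i * \<psi> (x$i) - C * ln (x$i)))"
      by (intro sum_mono term_bd)
    also have "\<dots> = objF L' \<gamma>' \<psi> C y - objF L' \<gamma>' \<psi> C x"
      unfolding objF_eq by (simp add: sum_subtractf)
    finally show ?thesis .
  qed
  moreover have "objF L' \<gamma>' \<psi> C y \<le> objF L' \<gamma>' \<psi> C x" using yle xO by blast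
  ultimately have main: "C * (\<Sum>i\<in>UNIV. w i) \<le> - (\<Sum>i\<in>UNIV. a i * u i)" using D_nonneg by linarith
  define m where "m = Max (range (\<lambda>i. \<bar>u i\<bar>))"
  have um: "\<bar>u i\<bar> \<le> m" for i unfolding m_def by (rule Max_ge) auto
  obtain j where j: "\<bar>u j\<bar> = m"
  proof -
    have "m \<in> range (\<lambda>i. \<bar>u i\<bar>)" unfolding m_def by (rule Max_in) auto
    then show ?thesis using that by blast
  qed
  have m0: "m \<ge> 0" using j by auto
  define Q where "Q = (\<Sum>i\<in>UNIV. (u i)^2)"
  define A where "A = (\<Sum>i\<in>UNIV. (a i)^2)"
  have Qm: "m^2 \<le> Q"
  proof -
    have "(u j)^2 \<le> Q" unfolding Q_def by (rule member_le_sum) auto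
    then show ?thesis using j by (metis power2_abs)
  qed
  have wb: "(u i)^2 / (2 * (1 + m)) \<le> w i" for i
  proof -
    have xi: "x$i > 0" and yi: "y$i > 0" using xpos ypos by auto
    have r1: "y$i / x$i - 1 = u i" unfolding u_def h_def using xi by (simp add: field_simps)
    have "(y$i / x$i - 1)^2 / (2 * (1 + \<bar>y$i / x$i - 1\<bar>)) \<le> w i"
      unfolding w_def using xi yi by (intro w_bound) auto
    moreover have "(u i)^2 / (2 * (1 + m)) \<le> (u i)^2 / (2 * (1 + \<bar>u i\<bar>))"
      using um[of i] by (intro divide_left_mono mult_pos_pos) (auto simp: add_pos_nonneg)
    ultimately show ?thesis using r1 by simp
  qed
  have Qw: "Q / (2 * (1 + m)) \<le> (\<Sum>i\<in>UNIV. w i)"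
    unfolding Q_def sum_divide_distrib by (intro sum_mono wb)
  have CS: "(\<Sum>i\<in>UNIV. a i * u i)^2 \<le> A * Q"
    unfolding A_def Q_def by (rule Cauchy_Schwarz_ineq_sum)
  have C9: "C \<ge> 9" and C1: "C \<ge> 32 * (\<Sum>i\<in>UNIV. (L'$i - L$i)^2 * (x$i)^2)"
    and C2: "C \<ge> 32 * (\<Sum>i\<in>UNIV. (\<gamma>'$i - \<gamma>$i)^2 * (\<psi>1 (x$i))^2 * (x$i)^2)"
    using C_big by auto
  have "A \<le> (\<Sum>i\<in>UNIV. 2 * ((L'$i - L$i)^2 * (x$i)^2) + 2 * ((\<gamma>'$i - \<gamma>$i)^2 * (\<psi>1 (x$i))^2 * (x$i)^2))"
    unfolding A_def
  proof (intro sum_mono)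
    fix i
    have "(p + q)^2 \<le> 2 * p^2 + 2 * q^2" for p q :: real
      using sum_squares_ge_zero[of "p - q" 0] by (simp add: power2_eq_square algebra_simps)
    note sq = this[of "(L'$i - L$i) * x$i" "(\<gamma>'$i - \<gamma>$i) * \<psi>1 (x$i) * x$i"]
    show "(a i)^2 \<le> 2 * ((L'$i - L$i)^2 * (x$i)^2) + 2 * ((\<gamma>'$i - \<gamma>$i)^2 * (\<psi>1 (x$i))^2 * (x$i)^2)"
    proof -
      have e: "a i = (L'$i - L$i) * x$i + (\<gamma>'$i - \<gamma>$i) * \<psi>1 (x$i) * x$i"
        by (simp add: a_def algebra_simps)
      have e1: "((L'$i - L$i) * x$i)^2 = (L'$i - L$i)^2 * (x$i)^2" by (simp add: power_mult_distrib)
      have e2: "((\<gamma>'$i - \<gamma>$i) * \<psi>1 (x$i) * x$i)^2 = (\<gamma>'$i - \<gamma>$i)^2 * (\<psi>1 (x$i))^2 * (x$i)^2"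
        by (simp add: power_mult_distrib)
      show ?thesis using e e1 e2 sq by simp
    qed
  qed
  also have "\<dots> \<le> C / 8" using C1 C2 by (simp add: sum.distrib sum_distrib_left[symmetric])
  finally have AC: "A \<le> C / 8" .
  define P where "P = C * (Q / (2 * (1 + m)))"
  have P0: "0 \<le> P" unfolding P_def Q_def using C_pos m0 by (intro mult_nonneg_nonneg divide_nonneg_pos sum_nonneg) auto
  have "P \<le> - (\<Sum>i\<in>UNIV. a i * u i)"
  proof -
    have "C * (Q / (2 * (1 + m))) \<le> C * (\<Sum>i\<in>UNIV. w i)" using Qw C_pos by (intro mult_left_mono) auto
    then show ?thesis unfolding P_def using main by linarith
  qed
  then have "P^2 \<le> (- (\<Sum>i\<in>UNIV. a i * u i))^2" using P0 by (intro power_mono) auto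
  then have "P^2 \<le> (\<Sum>i\<in>UNIV. a i * u i)^2" by simp
  also have "\<dots> \<le> A * Q" by (rule CS)
  also have "\<dots> \<le> C / 8 * Q" using AC Q_def by (intro mult_right_mono) (auto intro!: sum_nonneg)
  finally have PQ: "P^2 \<le> C / 8 * Q" .
  have m_half: "m \<le> 1/2"
  proof (rule ccontr)
    assume "\<not> m \<le> 1/2"
    then have mh: "m > 1/2" by simp
    then have "m^2 > 0" by simp
    then have Qp: "Q > 0" using Qm by linarith
    have "P^2 = C^2 * Q^2 / (4 * (1 + m)^2)" unfolding P_def by (simp add: power2_eq_square field_simps)
    then have eqP: "8 * P^2 * (1 + m)^2 = 2 * (C^2 * Q^2)" using m0 by (simp add: field_simps)
    have "8 * P^2 \<le> C * Q" using PQ by simp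
    then have "8 * P^2 * (1 + m)^2 \<le> C * Q * (1 + m)^2" by (intro mult_right_mono) auto
    then have "C^2 * Q^2 \<le> C / 8 * Q * (4 * (1 + m)^2)" using eqP by simp
    then have "C * Q * (C * Q) \<le> C * Q * ((1 + m)^2 / 2)" by (simp add: power2_eq_square algebra_simps)
    then have "C * Q \<le> (1 + m)^2 / 2" using C_pos Qp by (simp add: mult_le_cancel_left_pos)
    moreover have "9 * m^2 \<le> C * Q" using C9 Qm by (intro mult_mono) auto
    ultimately have "18 * m^2 \<le> (1 + m)^2" by simp
    moreover have "m * m > m * (1/2)" using mh by (intro mult_strict_left_mono) auto
    moreover have "(1 + m)^2 = 1 + 2 * m + m * m" by (simp add: power2_eq_square algebra_simps)
    moreover have "m^2 = m * m" by (simp add: power2_eq_square)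
    ultimately show False using mh by linarith
  qed
  show ?thesis
  proof (intro allI conjI)
    fix i
    have xi: "x$i > 0" using xpos by auto
    have "\<bar>(y$i - x$i) / x$i\<bar> \<le> 1/2" using um[of i] m_half unfolding u_def h_def by linarith
    then have "\<bar>y$i - x$i\<bar> / x$i \<le> 1/2" using xi by (simp add: abs_div)
    then have "\<bar>y$i - x$i\<bar> \<le> x$i / 2" using xi by (simp add: divide_le_eq)
    then have "y$i - x$i \<le> x$i / 2" "x$i - y$i \<le> x$i / 2" using abs_ge_self[of "y$i - x$i"] abs_ge_minus_self[of "y$i - x$i"] by linarith+
    then show "x$i / 2 \<le> y$i" "y$i \<le> 2 * x$i" using xi by linarith+
  qed
qed
end
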